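(* Let $F:(0,\infty)\to\mathbb{R}$ be convex and continuously differentiable with $F(1)=0$, $\lim_{x\to0^+}F(x)<\infty$ and $\lim_{x\to\infty}F'(x)<\infty$. Let $P,Q$ and $P_i,Q_i$ ($i\in\mathbb{N}$) be probability measures on a common measurable space, all mutually absolutely continuous, such that $P_i\xrightarrow{\mathcal{M}}P$ and $Q_i\xrightarrow{\mathcal{M}}Q$. Then $D(P_i,Q_i)\to D(P,Q)$ as $i\to\infty$, where $D(P,Q)=\mathbf{E}_{\boldsymbol{x}\sim P}\big[F\big(\tfrac{dQ}{dP}(\boldsymbol{x})\big)\big]$.
   Context: $P_i\xrightarrow{\mathcal{M}}P$ means: for all $\epsilon>0$ and $\delta>0$ there is $i_0$ such that for all $i\ge i_0$, $\mathbf{P}_{\boldsymbol{x}\sim P}\big(1-\epsilon\le\frac{dP_i}{dP}(\boldsymbol{x})\le1+\epsilon\big)\ge1-\delta$. *)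

theory Defs
  imports "HOL-Probability.Probability"
begin

text \<open>Radon-Nikodym derivative dN/dM as a real-valued function.\<close>
definition rn :: "'a measure \<Rightarrow> 'a measure \<Rightarrow> 'a \<Rightarrow> real" where
  "rn M N x = enn2real (RN_deriv M N x)"

definition M_conv :: "(nat \<Rightarrow> 'a measure) \<Rightarrow> 'a measure \<Rightarrow> bool" where
  "M_conv Ps P \<longleftrightarrow>
     (\<forall>\<epsilon>>0. \<forall>\<delta>>0. \<exists>i0. \<forall>i\<ge>i0.
        measure P {x \<in> space P. 1 - \<epsilon> \<le> rn P (Ps i) x \<and> rn P (Ps i) x \<le> 1 + \<epsilon>} \<ge> 1 - \<delta>)"

definition fdiv :: "(real \<Rightarrow> real) \<Rightarrow> 'a measure \<Rightarrow> 'a measure \<Rightarrow> real" where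
  "fdiv F P Q = (\<integral>x. F (rn P Q x) \<partial>P)"

end

theory Submission
  imports Defs
begin


lemma F_facts:
  fixes F :: "real \<Rightarrow> real"
  assumes convex: "convex_on {0<..} F"
    and diff: "\<forall>x>0. F differentiable (at x)"
    and F1: "F 1 = 0"
    and lim0: "(F \<longlongrightarrow> F0) (at_right 0)"
    and liminf: "(deriv F \<longlongrightarrow> L) at_top"
  shows "\<exists>a b. a \<ge> 0 \<and> b \<ge> 0 \<and> (\<forall>x>0. \<bar>F x\<bar> \<le> a + b * x \<and> \<bar>x * deriv F x\<bar> \<le> a + b * x)"
proof -
  have der: "(F has_real_derivative deriv F x) (at x)" if "x > 0" for x
    using diff that DERIV_deriv_iff_real_differentiable by blast
  have tan: "deriv F x * (y - x) \<le> F y - F x" if "x > 0" "y > 0" for x y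
  proof (rule convex_on_imp_above_tangent[OF convex])
    show "connected {0::real<..}" by (simp add: convex_connected)
    show "x \<in> interior {0<..}" using that by (simp add: interior_open)
    show "y \<in> {0<..}" using that by simp
    show "(F has_real_derivative deriv F x) (at x within {0<..})"
      using der[OF that(1)] by (rule has_field_derivative_at_within)
  qed
  have mono: "deriv F x \<le> deriv F y" if "0 < x" "x < y" for x y
  proof -
    have "deriv F x * (y - x) \<le> F y - F x" using tan that by auto
    moreover have "deriv F y * (x - y) \<le> F x - F y" using tan that by auto
    ultimately have "deriv F x * (y - x) \<le> deriv F y * (y - x)" by (simp add: algebra_simps)
    thus ?thesis using that by simp
  qed
  have leL: "deriv F x \<le> L" if "x > 0" for x
  proof (rule tendsto_lowerbound[OF liminf])
    show "\<forall>\<^sub>F y in at_top. deriv F x \<le> deriv F y"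
      using eventually_gt_at_top[of x] by eventually_elim (use mono that in auto)
  qed simp
  have up: "F x \<le> F0 + x * deriv F x" if "x > 0" for x
  proof -
    have "((\<lambda>y. F y - deriv F x * (y - x)) \<longlongrightarrow> F0 - deriv F x * (0 - x)) (at_right 0)"
      by (intro tendsto_intros lim0)
    moreover have "\<forall>\<^sub>F y in at_right 0. F x \<le> F y - deriv F x * (y - x)"
      using eventually_at_right_less[of "0::real"] by eventually_elim (use tan that in force)
    ultimately have "F x \<le> F0 - deriv F x * (0 - x)"
      by (rule tendsto_lowerbound) simp
    thus ?thesis by (simp add: mult.commute)
  qed
  have low: "deriv F 1 * (x - 1) \<le> F x" if "x > 0" for x
    using tan[of 1 x] that F1 by simp
  define a where "a = \<bar>F0\<bar> + \<bar>deriv F 1\<bar>"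
  define b where "b = \<bar>L\<bar> + \<bar>deriv F 1\<bar>"
  have "\<forall>x>0. \<bar>F x\<bar> \<le> a + b * x \<and> \<bar>x * deriv F x\<bar> \<le> a + b * x"
  proof (intro allI impI conjI)
    fix x :: real assume x: "x > 0"
    have l1: "x * deriv F x \<le> x * L" using leL[OF x] x by (simp add: mult_left_mono)
    have l2: "x * L \<le> \<bar>L\<bar> * x" using x by (simp add: mult.commute mult_right_mono)
    have l3: "- \<bar>deriv F 1\<bar> * (x + 1) \<le> deriv F 1 * (x - 1)"
    proof (cases "deriv F 1 \<ge> 0")
      case True thus ?thesis using x by (simp add: algebra_simps)
    next
      case False thus ?thesis using x by (simp add: algebra_simps)
    qed
    have e: "a + b * x = \<bar>F0\<bar> + \<bar>deriv F 1\<bar> + \<bar>L\<bar> * x + \<bar>deriv F 1\<bar> * x"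
      unfolding a_def b_def by (simp add: algebra_simps)
    have e2: "- \<bar>deriv F 1\<bar> * (x + 1) = - (\<bar>deriv F 1\<bar> * x) - \<bar>deriv F 1\<bar>" by (simp add: algebra_simps)
    have p: "0 \<le> \<bar>deriv F 1\<bar> * x" "F0 \<le> \<bar>F0\<bar>" "- F0 \<le> \<bar>F0\<bar>" "0 \<le> \<bar>deriv F 1\<bar>" "0 \<le> \<bar>L\<bar> * x" "0 \<le> \<bar>F0\<bar>" using x by auto
    show "\<bar>F x\<bar> \<le> a + b * x"
      unfolding abs_le_iff using up[OF x] low[OF x] l1 l2 l3 e e2 p by linarith
    show "\<bar>x * deriv F x\<bar> \<le> a + b * x"
      unfolding abs_le_iff using up[OF x] low[OF x] l1 l2 l3 e e2 p by linarith
  qed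
  moreover have "a \<ge> 0" "b \<ge> 0" unfolding a_def b_def by auto
  ultimately show ?thesis by blast
qed



lemma pw_good:
  fixes F F' :: "real \<Rightarrow> real"
  assumes tan: "\<forall>x>0. \<forall>y>0. F' x * (y - x) \<le> F y - F x"
    and bnd: "\<forall>x>0. \<bar>F x\<bar> \<le> a + b * x \<and> \<bar>x * F' x\<bar> \<le> a + b * x"
    and ab: "a \<ge> 0" "b \<ge> 0"
    and pos: "p > 0" "s > 0" "r > 0"
    and e: "e \<ge> 0" "e \<le> 1/2"
    and pe: "1 - e \<le> p" "p \<le> 1 + e" and se: "1 - e \<le> s" "s \<le> 1 + e"
  shows "\<bar>p * F (s * r / p) - F r\<bar> \<le> e * ((13 * a + 39 * b) * (1 + r))"
proof -
  define t where "t = s * r / p"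
  have tpos: "t > 0" using pos by (simp add: t_def)
  have p2: "p \<ge> 1/2" using pe e by linarith
  have tle: "t \<le> 3 * r"
  proof -
    have "s \<le> 3 * p" using p2 se e by linarith
    hence "s * r \<le> 3 * p * r" using pos by (simp add: mult_right_mono)
    thus ?thesis unfolding t_def using pos by (simp add: divide_le_eq mult.commute mult.left_commute)
  qed
  have bt: "b * t \<le> 3 * b * r" using mult_left_mono[OF tle ab(2)] by (simp add: mult.assoc)
  have rle: "r \<le> 3 * t"
  proof -
    have "p \<le> 3 * s" using p2 se pe e by linarith
    hence "p * r \<le> 3 * s * r" using pos by (simp add: mult_right_mono)
    thus ?thesis unfolding t_def using pos by (simp add: le_divide_eq mult.commute mult.left_commute)
  qed
  have tr: "\<bar>t - r\<bar> \<le> 4 * e * r"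
  proof -
    have "t - r = r * (s - p) / p" unfolding t_def using pos by (simp add: field_simps)
    hence "\<bar>t - r\<bar> = r * \<bar>s - p\<bar> / p" using pos by (simp add: abs_mult)
    also have "\<dots> \<le> r * (2 * e) / p"
      using pos pe se by (intro divide_right_mono mult_left_mono) auto
    also have "\<dots> \<le> r * (2 * e) / (1/2)"
      using pos p2 e by (intro divide_left_mono) auto
    finally show ?thesis by (simp add: algebra_simps)
  qed
  have h4: "F t - F r \<le> F' t * (t - r)" using tan[rule_format, OF tpos, of r] pos by (simp add: algebra_simps)
  have h5: "F' r * (t - r) \<le> F t - F r" using tan[rule_format, of r t] tpos pos by blast
  have b1: "\<bar>F' r * (t - r)\<bar> \<le> 4 * e * (a + b * r)"
  proof -
    have "\<bar>F' r * (t - r)\<bar> = \<bar>F' r\<bar> * \<bar>t - r\<bar>" by (simp add: abs_mult)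
    also have "\<dots> \<le> \<bar>F' r\<bar> * (4 * e * r)" by (intro mult_left_mono tr) auto
    also have "\<dots> = 4 * e * \<bar>r * F' r\<bar>" using pos by (simp add: abs_mult)
    also have "\<dots> \<le> 4 * e * (a + b * r)" using bnd[rule_format, of r] pos e by (intro mult_left_mono) auto
    finally show ?thesis .
  qed
  have b2: "\<bar>F' t * (t - r)\<bar> \<le> 12 * e * (a + 3 * b * r)"
  proof -
    have "\<bar>F' t * (t - r)\<bar> = \<bar>F' t\<bar> * \<bar>t - r\<bar>" by (simp add: abs_mult)
    also have "\<dots> \<le> \<bar>F' t\<bar> * (4 * e * (3 * t))"
    proof -
      have m1: "4*e*r \<le> 4*e*(3*t)" using rle e by (intro mult_left_mono) auto
      show ?thesis using tr m1 by (intro mult_left_mono) auto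
    qed
    also have "\<dots> = 12 * e * \<bar>t * F' t\<bar>" using tpos by (simp add: abs_mult)
    also have "\<dots> \<le> 12 * e * (a + b * t)" using bnd[rule_format, OF tpos] e by (intro mult_left_mono) auto
    also have "\<dots> \<le> 12 * e * (a + 3 * b * r)" using bt e by (intro mult_left_mono) auto
    finally show ?thesis .
  qed
  have b3: "\<bar>(p - 1) * F t\<bar> \<le> e * (a + 3 * b * r)"
  proof -
    have "\<bar>(p - 1) * F t\<bar> = \<bar>p - 1\<bar> * \<bar>F t\<bar>" by (simp add: abs_mult)
    also have "\<dots> \<le> e * (a + b * t)" using bnd[rule_format, OF tpos] pe e by (intro mult_mono) auto
    also have "\<dots> \<le> e * (a + 3 * b * r)" using bt e by (intro mult_left_mono) auto
    finally show ?thesis .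
  qed
  have "p * F t - F r = (p - 1) * F t + (F t - F r)" by (simp add: algebra_simps)
  hence "\<bar>p * F t - F r\<bar> \<le> e * (a + 3 * b * r) + 12 * e * (a + 3 * b * r)"
  proof -
    have m: "4 * e * (a + b * r) \<le> 12 * e * (a + 3 * b * r)"
      using e ab pos by (intro mult_right_mono[of "4*e" "12*e", THEN order_trans] mult_left_mono) (auto simp: mult_left_mono)
    have u1: "F' t * (t - r) \<le> \<bar>F' t * (t - r)\<bar>" "- (F' r * (t - r)) \<le> \<bar>F' r * (t - r)\<bar>" by auto
    have u2: "(p - 1) * F t \<le> \<bar>(p - 1) * F t\<bar>" "- ((p - 1) * F t) \<le> \<bar>(p - 1) * F t\<bar>" by auto
    show ?thesis using b1 b2 b3 h4 h5 m u1 u2 \<open>p * F t - F r = _\<close> unfolding abs_le_iff by (intro conjI; linarith)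
  qed
  also have "\<dots> \<le> e * ((13 * a + 39 * b) * (1 + r))"
    using e ab pos by (simp add: algebra_simps)
  finally show ?thesis unfolding t_def .
qed


lemma F_tan:
  fixes F :: "real \<Rightarrow> real"
  assumes convex: "convex_on {0<..} F" and diff: "\<forall>x>0. F differentiable (at x)"
  shows "\<forall>x>0. \<forall>y>0. deriv F x * (y - x) \<le> F y - F x"
proof (intro allI impI)
  fix x y :: real assume that: "x > 0" "y > 0"
  have der: "(F has_real_derivative deriv F x) (at x)"
    using diff that DERIV_deriv_iff_real_differentiable by blast
  show "deriv F x * (y - x) \<le> F y - F x"
  proof (rule convex_on_imp_above_tangent[OF convex])
    show "connected {0::real<..}" by (simp add: convex_connected)
    show "x \<in> interior {0<..}" using that by (simp add: interior_open)
    show "y \<in> {0<..}" using that by simp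
    show "(F has_real_derivative deriv F x) (at x within {0<..})"
      using der by (rule has_field_derivative_at_within)
  qed
qed

lemma F_cont:
  fixes F :: "real \<Rightarrow> real"
  assumes diff: "\<forall>x>0. F differentiable (at x)"
  shows "continuous_on {0<..} F"
proof -
  have "\<forall>x\<in>{0<..}. isCont F x"
    using diff differentiable_imp_continuous_within by auto
  thus ?thesis by (intro continuous_at_imp_continuous_on) auto
qed

lemma pw_bad1:
  fixes F :: "real \<Rightarrow> real"
  assumes bnd: "\<forall>x>0. \<bar>F x\<bar> \<le> a + b * x"
    and pos: "p > 0" "s > 0" "r > 0"
  shows "\<bar>p * F (s * r / p)\<bar> \<le> a * p + b * (s * r)"
proof -
  have t: "s * r / p > 0" using pos by simp
  have "\<bar>p * F (s * r / p)\<bar> = p * \<bar>F (s * r / p)\<bar>" using pos by (simp add: abs_mult)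
  also have "\<dots> \<le> p * (a + b * (s * r / p))" using bnd[rule_format, OF t] pos by (intro mult_left_mono) auto
  also have "\<dots> = a * p + b * (s * r)" using pos by (simp add: field_simps)
  finally show ?thesis .
qed

lemma pw_bad:
  fixes F :: "real \<Rightarrow> real"
  assumes bnd: "\<forall>x>0. \<bar>F x\<bar> \<le> a + b * x"
    and pos: "p > 0" "s > 0" "r > 0"
  shows "\<bar>p * F (s * r / p) - F r\<bar> \<le> a * p + b * (s * r) + a + b * r"
proof -
  have t: "s * r / p > 0" using pos by simp
  have "\<bar>p * F (s * r / p)\<bar> = p * \<bar>F (s * r / p)\<bar>" using pos by (simp add: abs_mult)
  also have "\<dots> \<le> p * (a + b * (s * r / p))" using bnd[rule_format, OF t] pos by (intro mult_left_mono) auto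
  also have "\<dots> = a * p + b * (s * r)" using pos by (simp add: field_simps)
  finally have 1: "\<bar>p * F (s * r / p)\<bar> \<le> a * p + b * (s * r)" .
  have 2: "\<bar>F r\<bar> \<le> a + b * r" using bnd pos by auto
  show ?thesis using 1 2 by linarith
qed


lemma rn_meas[measurable]: "rn M N \<in> borel_measurable M"
  unfolding rn_def by measurable

lemma rn_nonneg[simp]: "0 \<le> rn M N x"
  unfolding rn_def by simp

lemma meas_F:
  fixes F :: "real \<Rightarrow> real"
  assumes F: "continuous_on {0<..} F" and g: "g \<in> borel_measurable M" and nn: "\<forall>x\<in>space M. g x \<ge> 0"
  shows "(\<lambda>x. F (g x)) \<in> borel_measurable M"
proof -
  let ?G = "\<lambda>y::real. if y \<in> {0<..} then F y else F 0"
  have "?G \<in> borel_measurable borel"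
    by (rule borel_measurable_continuous_on_if) (auto intro: F)
  hence "(\<lambda>x. ?G (g x)) \<in> borel_measurable M"
    using g by (rule measurable_compose[rotated])
  moreover have "?G (g x) = F (g x)" if "x \<in> space M" for x
  proof (cases "g x > 0")
    case False
    then have "g x = 0" using nn that by force
    then show ?thesis by simp
  qed simp
  ultimately show ?thesis using measurable_cong[of M "\<lambda>x. ?G (g x)" "\<lambda>x. F (g x)"] by blast
qed

lemma rn_pos:
  assumes "prob_space M" "prob_space N" "sets N = sets M"
    "absolutely_continuous M N" "absolutely_continuous N M"
  shows "AE x in M. rn M N x > 0"
proof -
  interpret M: prob_space M by fact
  interpret N: prob_space N by fact
  have fin: "finite_measure N" by unfold_locales
  obtain D where D: "D \<in> borel_measurable M" "AE x in M. RN_deriv M N x = ennreal (D x)"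
    "AE x in N. 0 < D x" "\<And>x. 0 \<le> D x"
    using M.real_RN_deriv[OF fin assms(4,3)] by blast
  have "AE x in M. 0 < D x"
    by (rule absolutely_continuous_AE[OF assms(3)[symmetric] assms(5) D(3)])
  with D(2) show ?thesis
    by eventually_elim (simp add: rn_def D(4))
qed

lemma rn_chain:
  assumes "prob_space M" "prob_space N" "prob_space K" "sets N = sets M" "sets K = sets M"
    "absolutely_continuous M N" "absolutely_continuous N K"
  shows "AE x in M. rn M N x * rn N K x = rn M K x"
proof -
  interpret M: prob_space M by fact
  interpret N: prob_space N by fact
  have mN: "RN_deriv N K \<in> borel_measurable M"
  proof -
    have "measurable N borel = measurable M borel" by (rule measurable_cong_sets[OF assms(4) refl])
    with borel_measurable_RN_deriv[of N K] show ?thesis by metis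
  qed
  have "density M (\<lambda>x. RN_deriv M N x * RN_deriv N K x) = density (density M (RN_deriv M N)) (RN_deriv N K)"
    by (rule density_density_eq[symmetric, OF borel_measurable_RN_deriv mN])
  also have "\<dots> = density N (RN_deriv N K)"
    by (simp only: M.density_RN_deriv[OF assms(6,4)])
  also have "\<dots> = K" by (rule N.density_RN_deriv[OF assms(7)]) (use assms(4,5) in simp)
  finally have "AE x in M. RN_deriv M N x * RN_deriv N K x = RN_deriv M K x"
    using mN by (intro M.RN_deriv_unique) auto
  thus ?thesis unfolding rn_def by eventually_elim (simp flip: enn2real_mult)
qed

lemma rn_integral:
  assumes "prob_space M" "prob_space N" "sets N = sets M" "absolutely_continuous M N"
    and f: "f \<in> borel_measurable M"
  shows "integral\<^sup>L N f = (\<integral>x. rn M N x * f x \<partial>M)"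
    and "integrable N f \<longleftrightarrow> integrable M (\<lambda>x. rn M N x * f x)"
proof -
  interpret M: prob_space M by fact
  interpret N: prob_space N by fact
  have "sigma_finite_measure N" by unfold_locales
  thus "integral\<^sup>L N f = (\<integral>x. rn M N x * f x \<partial>M)"
    "integrable N f \<longleftrightarrow> integrable M (\<lambda>x. rn M N x * f x)"
    using M.RN_deriv_integral[OF _ assms(4,3) f] M.RN_deriv_integrable[OF _ assms(4,3) f]
    unfolding rn_def by auto
qed

lemma rn_integrable:
  assumes "prob_space M" "prob_space N" "sets N = sets M" "absolutely_continuous M N"
  shows "integrable M (rn M N)"
proof -
  interpret N: prob_space N by fact
  have "integrable N (\<lambda>_. 1::real)" by simp
  thus ?thesis using rn_integral(2)[OF assms, of "\<lambda>_. 1"] by simp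
qed

lemma rn_measure:
  assumes "prob_space M" "prob_space N" "sets N = sets M" "absolutely_continuous M N"
    and A: "A \<in> sets M"
  shows "measure N A = (\<integral>x. rn M N x * indicator A x \<partial>M)"
proof -
  have "measure N A = integral\<^sup>L N (indicator A)"
    using A assms(3) sets.sets_into_space[of A N] by (simp add: Int_absorb2)
  also have "\<dots> = (\<integral>x. rn M N x * indicator A x \<partial>M)"
    using A by (intro rn_integral(1)[OF assms(1-4)]) auto
  finally show ?thesis .
qed

lemma transfer:
  assumes "prob_space M" "prob_space N" "sets N = sets M" "absolutely_continuous M N" "e > 0"
  shows "\<exists>d>0. \<forall>A\<in>sets M. measure M A < d \<longrightarrow> measure N A < e"
proof -
  interpret M: prob_space M by fact
  interpret N: prob_space N by fact
  define S where "S n = {x \<in> space M. real n < rn M N x}" for n :: nat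
  have Sm: "S n \<in> sets M" for n unfolding S_def by measurable
  have SN: "S n \<in> sets N" for n using Sm assms(3) by simp
  have dec: "decseq S" unfolding decseq_def S_def by auto
  have inter: "(\<Inter>n. S n) = {}"
  proof (rule ccontr)
    assume "(\<Inter>n. S n) \<noteq> {}"
    then obtain x where x: "\<And>n. x \<in> S n" by blast
    obtain n :: nat where "rn M N x < real n" using reals_Archimedean2 by blast
    with x[of n] show False unfolding S_def by auto
  qed
  have "(\<lambda>n. measure N (S n)) \<longlonglongrightarrow> measure N (\<Inter>n. S n)"
    by (rule Lim_measure_decseq) (use SN dec in auto)
  hence "(\<lambda>n. measure N (S n)) \<longlonglongrightarrow> 0" using inter by simp
  hence "eventually (\<lambda>n. measure N (S n) < e/2) sequentially"
    using assms(5) by (intro order_tendstoD(2)) auto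
  then obtain n0 where n0: "measure N (S n0) < e/2" by (auto simp: eventually_sequentially)
  define d where "d = e / (2 * (real n0 + 1))"
  have dpos: "d > 0" unfolding d_def using assms(5) by auto
  have nd: "real n0 * d \<le> e / 2"
  proof -
    have "real n0 * d = (e/2) * (real n0 / (real n0 + 1))" unfolding d_def by (simp add: field_simps)
    also have "\<dots> \<le> (e/2) * 1" using assms(5) by (intro mult_left_mono) auto
    finally show ?thesis by simp
  qed
  have "\<forall>A\<in>sets M. measure M A < d \<longrightarrow> measure N A < e"
  proof (intro ballI impI)
    fix A assume A: "A \<in> sets M" and Ad: "measure M A < d"
    define B where "B = A - S n0"
    have B: "B \<in> sets M" unfolding B_def using A Sm by auto
    have "measure N A \<le> measure N (S n0 \<union> B)"
      using A B SN assms(3) by (intro N.finite_measure_mono) (auto simp: B_def)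
    also have "\<dots> \<le> measure N (S n0) + measure N B"
      using B SN assms(3) by (intro measure_Un_le) auto
    also have "measure N B = (\<integral>x. rn M N x * indicator B x \<partial>M)"
      by (rule rn_measure[OF assms(1-4) B])
    also have "\<dots> \<le> (\<integral>x. real n0 * indicator B x \<partial>M)"
    proof (rule integral_mono)
      show "integrable M (\<lambda>x. rn M N x * indicator B x)"
        by (intro integrable_real_mult_indicator B rn_integrable[OF assms(1-4)])
      show "integrable M (\<lambda>x. real n0 * indicator B x)"
        using B by (intro integrable_real_mult_indicator) auto
      fix x assume "x \<in> space M"
      then show "rn M N x * indicator B x \<le> real n0 * indicator B x"
        unfolding B_def S_def by (auto split: split_indicator)
    qed
    also have "\<dots> = real n0 * measure M B"
      using B sets.sets_into_space[OF B] by (simp add: Int_absorb2)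
    also have "\<dots> \<le> real n0 * d"
    proof -
      have "measure M B \<le> measure M A" using A by (intro M.finite_measure_mono) (auto simp: B_def)
      thus ?thesis using Ad by (intro mult_left_mono) auto
    qed
    finally show "measure N A < e" using n0 nd by linarith
  qed
  thus ?thesis using dpos by blast
qed


lemma rn_meas': "sets M = sets K \<Longrightarrow> rn M N \<in> borel_measurable K"
  using measurable_cong_sets[of M K borel borel] rn_meas[of M N] by simp

theorem mainTheorem14:
  fixes F :: "real \<Rightarrow> real"
    and P Q :: "'a measure"
    and Ps Qs :: "nat \<Rightarrow> 'a measure"
  assumes convex: "convex_on {0<..} F"
    and diff: "\<forall>x>0. F differentiable (at x)"
    and cont_deriv: "continuous_on {0<..} (deriv F)"
    and F1: "F 1 = 0"
    and lim0: "\<exists>L. (F \<longlongrightarrow> L) (at_right 0)"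
    and liminf: "\<exists>L. (deriv F \<longlongrightarrow> L) at_top"
    and prob: "\<forall>M \<in> {P, Q} \<union> range Ps \<union> range Qs. prob_space M"
    and same_sets: "\<forall>M \<in> {P, Q} \<union> range Ps \<union> range Qs. sets M = sets P"
    and mutual_ac: "\<forall>M \<in> {P, Q} \<union> range Ps \<union> range Qs.
                      \<forall>N \<in> {P, Q} \<union> range Ps \<union> range Qs. absolutely_continuous M N"
    and convP: "M_conv Ps P"
    and convQ: "M_conv Qs Q"
  shows "(\<lambda>i. fdiv F (Ps i) (Qs i)) \<longlonglongrightarrow> fdiv F P Q"
proof -
  obtain F0 where F0: "(F \<longlongrightarrow> F0) (at_right 0)" using lim0 by blast
  obtain L where L: "(deriv F \<longlongrightarrow> L) at_top" using liminf by blast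
  have tan: "\<forall>x>0. \<forall>y>0. deriv F x * (y - x) \<le> F y - F x" by (rule F_tan[OF convex diff])
  have Fcont: "continuous_on {0<..} F" by (rule F_cont[OF diff])
  obtain a b where ab: "a \<ge> 0" "b \<ge> 0"
    and bnd: "\<forall>x>0. \<bar>F x\<bar> \<le> a + b * x \<and> \<bar>x * deriv F x\<bar> \<le> a + b * x"
    using F_facts[OF convex diff F1 F0 L] by blast
  have bnd1: "\<forall>x>0. \<bar>F x\<bar> \<le> a + b * x" using bnd by blast
  define C where "C = 13 * a + 39 * b"
  have C0: "C \<ge> 0" unfolding C_def using ab by simp
  have pP: "prob_space P" and pQ: "prob_space Q" and pPs: "\<And>i. prob_space (Ps i)"
    and pQs: "\<And>i. prob_space (Qs i)" using prob by auto
  have sQ: "sets Q = sets P" and sPs: "\<And>i. sets (Ps i) = sets P"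
    and sQs: "\<And>i. sets (Qs i) = sets P" using same_sets by auto
  have spQ: "space Q = space P" by (rule sets_eq_imp_space_eq[OF sQ])
  have spPs: "\<And>i. space (Ps i) = space P" by (rule sets_eq_imp_space_eq[OF sPs])
  have spQs: "\<And>i. space (Qs i) = space P" by (rule sets_eq_imp_space_eq[OF sQs])
  have acPQ: "absolutely_continuous P Q" and acQP: "absolutely_continuous Q P"
    and acPPs: "\<And>i. absolutely_continuous P (Ps i)" and acPsP: "\<And>i. absolutely_continuous (Ps i) P"
    and acQQs: "\<And>i. absolutely_continuous Q (Qs i)" and acPQs: "\<And>i. absolutely_continuous P (Qs i)"
    and acPsQs: "\<And>i. absolutely_continuous (Ps i) (Qs i)" and acQsQ: "\<And>i. absolutely_continuous (Qs i) Q"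
    using mutual_ac by auto
  interpret P: prob_space P by (rule pP)
  interpret Q: prob_space Q by (rule pQ)
  define p where "p i = rn P (Ps i)" for i
  define s where "s i = rn Q (Qs i)" for i
  define q where "q i = rn P (Qs i)" for i
  define r where "r = rn P Q"
  define H where "H i x = p i x * F (s i x * r x / p i x)" for i x
  define h where "h x = F (r x)" for x
  have mp[measurable]: "p i \<in> borel_measurable P" for i unfolding p_def by simp
  have ms[measurable]: "s i \<in> borel_measurable P" for i unfolding s_def by (rule rn_meas'[OF sQ])
  have mq[measurable]: "q i \<in> borel_measurable P" for i unfolding q_def by simp
  have mr[measurable]: "r \<in> borel_measurable P" unfolding r_def by simp
  have mH: "H i \<in> borel_measurable P" for i
  proof -
    have "(\<lambda>x. F (s i x * r x / p i x)) \<in> borel_measurable P"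
      by (rule meas_F[OF Fcont], measurable, simp add: s_def r_def p_def)
    thus ?thesis unfolding H_def by measurable
  qed
  have mh: "h \<in> borel_measurable P"
    unfolding h_def by (rule meas_F[OF Fcont], measurable, simp add: r_def)
  have ip: "integrable P (p i)" for i unfolding p_def by (rule rn_integrable[OF pP pPs sPs acPPs])
  have iq: "integrable P (q i)" for i unfolding q_def by (rule rn_integrable[OF pP pQs sQs acPQs])
  have ir: "integrable P r" unfolding r_def by (rule rn_integrable[OF pP pQ sQ acPQ])
  have AEi: "AE x in P. p i x > 0 \<and> s i x > 0 \<and> r x > 0 \<and>
      p i x * rn (Ps i) (Qs i) x = q i x \<and> r x * s i x = q i x" for i
  proof -
    have 1: "AE x in P. p i x > 0" unfolding p_def by (rule rn_pos[OF pP pPs sPs acPPs acPsP])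
    have "AE x in Q. s i x > 0" unfolding s_def by (rule rn_pos[OF pQ pQs sQs[unfolded sQ[symmetric]] acQQs acQsQ])
    hence 2: "AE x in P. s i x > 0" by (rule absolutely_continuous_AE[OF sQ[symmetric] acQP, rotated])
    have 3: "AE x in P. r x > 0" unfolding r_def by (rule rn_pos[OF pP pQ sQ acPQ acQP])
    have 4: "AE x in P. p i x * rn (Ps i) (Qs i) x = q i x"
      unfolding p_def q_def by (rule rn_chain[OF pP pPs pQs sPs sQs acPPs acPsQs])
    have 5: "AE x in P. r x * s i x = q i x"
      unfolding r_def s_def q_def by (rule rn_chain[OF pP pQ pQs sQ sQs acPQ acQQs])
    show ?thesis using 1 2 3 4 5 by eventually_elim auto
  qed
  have fdi: "fdiv F (Ps i) (Qs i) = integral\<^sup>L P (H i)" for i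
  proof -
    have mu: "(\<lambda>x. F (rn (Ps i) (Qs i) x)) \<in> borel_measurable P"
      by (rule meas_F[OF Fcont], rule rn_meas'[OF sPs], simp)
    have "fdiv F (Ps i) (Qs i) = (\<integral>x. F (rn (Ps i) (Qs i) x) \<partial>Ps i)" unfolding fdiv_def ..
    also have "\<dots> = (\<integral>x. p i x * F (rn (Ps i) (Qs i) x) \<partial>P)"
      unfolding p_def by (rule rn_integral(1)[OF pP pPs sPs acPPs mu])
    also have "\<dots> = integral\<^sup>L P (H i)"
    proof (rule integral_cong_AE)
      show "(\<lambda>x. p i x * F (rn (Ps i) (Qs i) x)) \<in> borel_measurable P" using mu by measurable
      show "H i \<in> borel_measurable P" by (rule mH)
      show "AE x in P. p i x * F (rn (Ps i) (Qs i) x) = H i x"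
        using AEi[of i]
      proof eventually_elim
        case (elim x)
        hence "rn (Ps i) (Qs i) x = s i x * r x / p i x"
          by (simp add: field_simps mult.commute)
        thus ?case unfolding H_def by simp
      qed
    qed
    finally show ?thesis .
  qed
  have fd: "fdiv F P Q = integral\<^sup>L P h" unfolding fdiv_def h_def r_def ..
  have iH: "integrable P (H i)" for i
  proof (rule Bochner_Integration.integrable_bound[where f="\<lambda>x. a * p i x + b * q i x"])
    show "integrable P (\<lambda>x. a * p i x + b * q i x)" using ip iq by auto
    show "H i \<in> borel_measurable P" by (rule mH)
    show "AE x in P. norm (H i x) \<le> norm (a * p i x + b * q i x)"
      using AEi[of i]
    proof eventually_elim
      case (elim x)
      have "\<bar>H i x\<bar> \<le> a * p i x + b * (s i x * r x)"
        unfolding H_def by (rule pw_bad1[OF bnd1]) (use elim in auto)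
      also have "\<dots> = a * p i x + b * q i x" using elim by (simp add: mult.commute)
      also have "\<dots> = norm (a * p i x + b * q i x)"
      proof -
        have "0 \<le> a * p i x + b * q i x" using ab elim
          by (intro add_nonneg_nonneg mult_nonneg_nonneg) (auto simp: q_def)
        thus ?thesis by simp
      qed
      finally show ?case by simp
    qed
  qed
  have ih: "integrable P h"
  proof (rule Bochner_Integration.integrable_bound[where f="\<lambda>x. a + b * r x"])
    show "integrable P (\<lambda>x. a + b * r x)" using ir by auto
    show "h \<in> borel_measurable P" by (rule mh)
    show "AE x in P. norm (h x) \<le> norm (a + b * r x)"
      using AEi[of 0]
    proof eventually_elim
      case (elim x)
      have "\<bar>h x\<bar> \<le> a + b * r x" unfolding h_def using bnd1 elim by auto
      also have "\<dots> = norm (a + b * r x)"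
      proof -
        have "0 \<le> a + b * r x" using ab elim by (intro add_nonneg_nonneg mult_nonneg_nonneg) auto
        thus ?thesis by simp
      qed
      finally show ?case by simp
    qed
  qed
  have r1: "integral\<^sup>L P r = 1"
  proof -
    have "integral\<^sup>L Q (\<lambda>_. 1::real) = (\<integral>x. r x * 1 \<partial>P)"
      unfolding r_def by (rule rn_integral(1)[OF pP pQ sQ acPQ]) simp
    moreover have "integral\<^sup>L Q (\<lambda>_. 1::real) = 1" by (simp add: Q.prob_space)
    ultimately show ?thesis by simp
  qed
  have key: "\<bar>integral\<^sup>L P (H i) - integral\<^sup>L P h\<bar> \<le> 2 * \<epsilon> * C + a * measure (Ps i) B
      + b * measure (Qs i) B + a * measure P B + b * measure Q B"
    if e: "0 < \<epsilon>" "\<epsilon> \<le> 1/2" and BG: "B = space P - G"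
      and Gdef: "G = {x\<in>space P. 1-\<epsilon> \<le> p i x \<and> p i x \<le> 1+\<epsilon> \<and> 1-\<epsilon> \<le> s i x \<and> s i x \<le> 1+\<epsilon>}"
    for \<epsilon> i B G
  proof -
    have Gm: "G \<in> sets P" unfolding Gdef by measurable
    have Bm: "B \<in> sets P" unfolding BG using Gm by auto
    define bd where "bd x = \<epsilon> * C + (\<epsilon> * C) * r x + a * (p i x * indicator B x)
      + b * (q i x * indicator B x) + a * indicator B x + b * (r x * indicator B x)" for x
    have i1: "integrable P (\<lambda>x. p i x * indicator B x)" by (intro integrable_real_mult_indicator Bm ip)
    have i2: "integrable P (\<lambda>x. q i x * indicator B x)" by (intro integrable_real_mult_indicator Bm iq)
    have i3: "integrable P (\<lambda>x. r x * indicator B x)" by (intro integrable_real_mult_indicator Bm ir)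
    have i4: "integrable P (indicator B :: 'a \<Rightarrow> real)" using Bm by (intro integrable_real_indicator) (auto simp: P.emeasure_finite less_top[symmetric])
    have ibd: "integrable P bd" unfolding bd_def using i1 i2 i3 i4 ir by auto
    have ibd_eq: "integral\<^sup>L P bd = \<epsilon> * C + \<epsilon> * C * integral\<^sup>L P r
      + a * integral\<^sup>L P (\<lambda>x. p i x * indicator B x) + b * integral\<^sup>L P (\<lambda>x. q i x * indicator B x)
      + a * integral\<^sup>L P (indicator B) + b * integral\<^sup>L P (\<lambda>x. r x * indicator B x)"
      unfolding bd_def using i1 i2 i3 i4 ir by (simp add: P.prob_space)
    have m1: "integral\<^sup>L P (\<lambda>x. p i x * indicator B x) = measure (Ps i) B"
      unfolding p_def by (rule rn_measure[OF pP pPs sPs acPPs Bm, symmetric])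
    have m2: "integral\<^sup>L P (\<lambda>x. q i x * indicator B x) = measure (Qs i) B"
      unfolding q_def by (rule rn_measure[OF pP pQs sQs acPQs Bm, symmetric])
    have m3: "integral\<^sup>L P (\<lambda>x. r x * indicator B x) = measure Q B"
      unfolding r_def by (rule rn_measure[OF pP pQ sQ acPQ Bm, symmetric])
    have m4: "integral\<^sup>L P (indicator B :: 'a \<Rightarrow> real) = measure P B"
      using Bm sets.sets_into_space[OF Bm] by (simp add: Int_absorb2)
    have AE1: "AE x in P. norm (H i x - h x) \<le> bd x"
      using AEi[of i] AE_space
    proof eventually_elim
      case (elim x)
      have r0: "0 \<le> \<epsilon> * C + (\<epsilon> * C) * r x" using e C0 elim by auto
      show ?case
      proof (cases "x \<in> G")
        case True
        hence xB: "x \<notin> B" unfolding BG by auto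
        have g: "1-\<epsilon> \<le> p i x" "p i x \<le> 1+\<epsilon>" "1-\<epsilon> \<le> s i x" "s i x \<le> 1+\<epsilon>"
          using True unfolding Gdef by auto
        have "\<bar>H i x - h x\<bar> \<le> \<epsilon> * ((13 * a + 39 * b) * (1 + r x))"
          unfolding H_def h_def
          by (rule pw_good[OF tan bnd ab]) (use elim e g in auto)
        also have "\<dots> = bd x" unfolding bd_def C_def using xB by (simp add: algebra_simps)
        finally show ?thesis by simp
      next
        case False
        hence xB: "x \<in> B" unfolding BG using elim by auto
        have "\<bar>H i x - h x\<bar> \<le> a * p i x + b * (s i x * r x) + a + b * r x"
          unfolding H_def h_def by (rule pw_bad[OF bnd1]) (use elim in auto)
        also have "\<dots> = a * p i x + b * q i x + a + b * r x" using elim by (simp add: mult.commute)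
        also have "\<dots> \<le> bd x" unfolding bd_def using xB r0 by simp
        finally show ?thesis by simp
      qed
    qed
    have AE2: "AE x in P. 0 \<le> bd x"
      unfolding bd_def using e C0 ab
      by (intro AE_I2 add_nonneg_nonneg mult_nonneg_nonneg) (auto simp: p_def q_def r_def)
    have "\<bar>integral\<^sup>L P (H i) - integral\<^sup>L P h\<bar> = norm (\<integral>x. H i x - h x \<partial>P)"
      using iH[of i] ih by simp
    also have "\<dots> \<le> (\<integral>x. norm (H i x - h x) \<partial>P)" by (rule integral_norm_bound)
    also have "\<dots> \<le> integral\<^sup>L P bd" by (rule integral_mono_AE'[OF ibd AE1 AE2])
    also have "\<dots> = 2 * \<epsilon> * C + a * measure (Ps i) B
      + b * measure (Qs i) B + a * measure P B + b * measure Q B"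
      unfolding ibd_eq m1 m2 m3 m4 r1 by simp
    finally show ?thesis .
  qed
  show ?thesis
  proof (rule LIMSEQ_I)
    fix \<eta> :: real assume \<eta>: "0 < \<eta>"
    define K where "K = a + b"
    have K0: "K \<ge> 0" unfolding K_def using ab by simp
    define \<epsilon> where "\<epsilon> = min (1/2) (\<eta> / (4 * (2 * C + K + 1)))"
    define \<theta> where "\<theta> = \<eta> / (16 * (K + 1))"
    have e0: "0 < \<epsilon>" unfolding \<epsilon>_def using \<eta> C0 K0 by simp
    have e1: "\<epsilon> \<le> 1/2" unfolding \<epsilon>_def by (rule min.cobounded1)
    have t0: "0 < \<theta>" unfolding \<theta>_def using \<eta> K0 by simp
    have eb: "\<epsilon> * (2 * C + K) \<le> \<eta> / 4"
    proof -
      have "\<epsilon> \<le> \<eta> / (4 * (2 * C + K + 1))" unfolding \<epsilon>_def by (rule min.cobounded2)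
      hence "\<epsilon> * (4 * (2 * C + K + 1)) \<le> \<eta>" using C0 K0 by (simp add: le_divide_eq)
      moreover have "\<epsilon> * (2 * C + K) \<le> \<epsilon> * (2 * C + K + 1)" using e0 by simp
      ultimately show ?thesis by (simp add: algebra_simps)
    qed
    have tb: "4 * \<theta> * K \<le> \<eta> / 4"
    proof -
      have "4 * \<theta> * K = (\<eta> / 4) * (K / (K + 1))" unfolding \<theta>_def using K0 by (simp add: field_simps)
      also have "\<dots> \<le> (\<eta> / 4) * 1" using \<eta> K0 by (intro mult_left_mono) auto
      finally show ?thesis by simp
    qed
    obtain d1 where d1: "d1 > 0" "\<forall>A\<in>sets P. measure P A < d1 \<longrightarrow> measure Q A < \<theta>"
      using transfer[OF pP pQ sQ acPQ t0] by blast
    obtain d2 where d2: "d2 > 0" "\<forall>A\<in>sets Q. measure Q A < d2 \<longrightarrow> measure P A < \<theta>"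
      using transfer[OF pQ pP sQ[symmetric] acQP t0] by blast
    define \<delta> where "\<delta> = min \<theta> (min (d1/2) (d2/2))"
    have d0: "0 < \<delta>" unfolding \<delta>_def using t0 d1 d2 by simp
    obtain i1 where i1: "\<forall>i\<ge>i1. measure P {x \<in> space P. 1 - \<epsilon> \<le> rn P (Ps i) x \<and> rn P (Ps i) x \<le> 1 + \<epsilon>} \<ge> 1 - \<delta>"
      using convP e0 d0 unfolding M_conv_def by blast
    obtain i2 where i2: "\<forall>i\<ge>i2. measure Q {x \<in> space Q. 1 - \<epsilon> \<le> rn Q (Qs i) x \<and> rn Q (Qs i) x \<le> 1 + \<epsilon>} \<ge> 1 - \<delta>"
      using convQ e0 d0 unfolding M_conv_def by blast
    show "\<exists>no. \<forall>n\<ge>no. norm (fdiv F (Ps n) (Qs n) - fdiv F P Q) < \<eta>"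
    proof (intro exI allI impI)
      fix i assume i: "max i1 i2 \<le> i"
      define Gp where "Gp = {x \<in> space P. 1 - \<epsilon> \<le> p i x \<and> p i x \<le> 1 + \<epsilon>}"
      define Gs where "Gs = {x \<in> space P. 1 - \<epsilon> \<le> s i x \<and> s i x \<le> 1 + \<epsilon>}"
      define G where "G = {x\<in>space P. 1-\<epsilon> \<le> p i x \<and> p i x \<le> 1+\<epsilon> \<and> 1-\<epsilon> \<le> s i x \<and> s i x \<le> 1+\<epsilon>}"
      define B where "B = space P - G"
      have Gpm: "Gp \<in> sets P" unfolding Gp_def by measurable
      have Gsm: "Gs \<in> sets P" unfolding Gs_def by measurable
      have Gm: "G \<in> sets P" unfolding G_def by measurable
      have Bm: "B \<in> sets P" unfolding B_def using Gm by auto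
      have "measure P Gp \<ge> 1 - \<delta>" using i1 i unfolding Gp_def p_def by auto
      hence P1: "measure P (space P - Gp) \<le> \<delta>" using P.prob_compl[OF Gpm] by simp
      have "measure Q Gs \<ge> 1 - \<delta>" using i2 i spQ unfolding Gs_def s_def by auto
      hence Q1: "measure Q (space P - Gs) \<le> \<delta>" using Q.prob_compl[of Gs] Gsm sQ spQ by simp
      have dd: "\<delta> \<le> \<theta>" "\<delta> \<le> d1/2" "\<delta> \<le> d2/2" unfolding \<delta>_def by auto
      have c1: "space P - Gp \<in> sets P" using Gpm by auto
      have c2: "space P - Gs \<in> sets Q" using Gsm sQ by auto
      have "measure P (space P - Gp) < d1" using P1 dd d1(1) by linarith
      hence Q2: "measure Q (space P - Gp) < \<theta>" using d1(2) c1 by blast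
      have "measure Q (space P - Gs) < d2" using Q1 dd d2(1) by linarith
      hence P2: "measure P (space P - Gs) < \<theta>" using d2(2) c2 by blast
      have Beq: "B = (space P - Gp) \<union> (space P - Gs)" unfolding B_def G_def Gp_def Gs_def by auto
      have PB: "measure P B \<le> 2 * \<theta>"
      proof -
        have "measure P B \<le> measure P (space P - Gp) + measure P (space P - Gs)"
          unfolding Beq using Gpm Gsm by (intro measure_Un_le) auto
        thus ?thesis using P1 P2 dd by linarith
      qed
      have QB: "measure Q B \<le> 2 * \<theta>"
      proof -
        have "measure Q B \<le> measure Q (space P - Gp) + measure Q (space P - Gs)"
          unfolding Beq using Gpm Gsm sQ by (intro measure_Un_le) auto
        thus ?thesis using Q1 Q2 dd by linarith
      qed
      have PsB: "measure (Ps i) B \<le> \<epsilon> + measure P B"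
      proof -
        interpret Pi: prob_space "Ps i" by (rule pPs)
        have "measure (Ps i) G = (\<integral>x. p i x * indicator G x \<partial>P)"
          unfolding p_def by (rule rn_measure[OF pP pPs sPs acPPs Gm])
        also have "\<dots> \<ge> (\<integral>x. (1 - \<epsilon>) * indicator G x \<partial>P)"
        proof (rule integral_mono)
          show "integrable P (\<lambda>x. p i x * indicator G x)" by (intro integrable_real_mult_indicator Gm ip)
          show "integrable P (\<lambda>x. (1 - \<epsilon>) * indicator G x)" using Gm
            by (intro integrable_real_mult_indicator) auto
          fix x assume "x \<in> space P"
          show "(1 - \<epsilon>) * indicator G x \<le> p i x * indicator G x"
            unfolding G_def by (auto split: split_indicator)
        qed
        finally have "measure (Ps i) G \<ge> (1 - \<epsilon>) * measure P G"
          using Gm sets.sets_into_space[OF Gm] by (simp add: Int_absorb2)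
        moreover have "measure (Ps i) B = 1 - measure (Ps i) G"
          unfolding B_def using Pi.prob_compl[of G] Gm sPs spPs by simp
        moreover have "measure P B = 1 - measure P G"
          unfolding B_def using P.prob_compl[OF Gm] by simp
        moreover have "(1 - \<epsilon>) * (1 - measure P B) = 1 - \<epsilon> - measure P B + \<epsilon> * measure P B"
          by (simp add: algebra_simps)
        moreover have "0 \<le> \<epsilon> * measure P B" using e0 by simp
        ultimately show ?thesis by (smt (verit))
      qed
      have QsB: "measure (Qs i) B \<le> \<epsilon> + measure Q B"
      proof -
        interpret Qi: prob_space "Qs i" by (rule pQs)
        have GmQ: "G \<in> sets Q" using Gm sQ by simp
        have "measure (Qs i) G = (\<integral>x. s i x * indicator G x \<partial>Q)"
          unfolding s_def by (rule rn_measure[OF pQ pQs _ acQQs GmQ]) (simp add: sQs sQ)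
        also have "\<dots> \<ge> (\<integral>x. (1 - \<epsilon>) * indicator G x \<partial>Q)"
        proof (rule integral_mono)
          show "integrable Q (\<lambda>x. s i x * indicator G x)" unfolding s_def
            by (intro integrable_real_mult_indicator GmQ rn_integrable[OF pQ pQs _ acQQs]) (simp add: sQs sQ)
          show "integrable Q (\<lambda>x. (1 - \<epsilon>) * indicator G x)" using GmQ
            by (intro integrable_real_mult_indicator) auto
          fix x assume "x \<in> space Q"
          show "(1 - \<epsilon>) * indicator G x \<le> s i x * indicator G x"
            unfolding G_def by (auto split: split_indicator)
        qed
        finally have "measure (Qs i) G \<ge> (1 - \<epsilon>) * measure Q G"
          using GmQ sets.sets_into_space[OF GmQ] by (simp add: Int_absorb2)
        moreover have "measure (Qs i) B = 1 - measure (Qs i) G"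
          unfolding B_def using Qi.prob_compl[of G] Gm sQs spQs by simp
        moreover have "measure Q B = 1 - measure Q G"
          unfolding B_def using Q.prob_compl[of G] GmQ spQ by simp
        moreover have "(1 - \<epsilon>) * (1 - measure Q B) = 1 - \<epsilon> - measure Q B + \<epsilon> * measure Q B"
          by (simp add: algebra_simps)
        moreover have "0 \<le> \<epsilon> * measure Q B" using e0 by simp
        ultimately show ?thesis by (smt (verit))
      qed
      have k: "\<bar>integral\<^sup>L P (H i) - integral\<^sup>L P h\<bar> \<le> 2 * \<epsilon> * C + a * measure (Ps i) B
          + b * measure (Qs i) B + a * measure P B + b * measure Q B"
        by (rule key[OF e0 e1 B_def G_def])
      have s1: "a * measure (Ps i) B \<le> a * \<epsilon> + a * (2 * \<theta>)"
        using mult_left_mono[OF PsB ab(1)] mult_left_mono[OF PB ab(1)] by (simp add: algebra_simps)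
      have s2: "b * measure (Qs i) B \<le> b * \<epsilon> + b * (2 * \<theta>)"
        using mult_left_mono[OF QsB ab(2)] mult_left_mono[OF QB ab(2)] by (simp add: algebra_simps)
      have s3: "a * measure P B \<le> a * (2 * \<theta>)" using mult_left_mono[OF PB ab(1)] .
      have s4: "b * measure Q B \<le> b * (2 * \<theta>)" using mult_left_mono[OF QB ab(2)] .
      have s5: "2 * \<epsilon> * C + a * \<epsilon> + b * \<epsilon> = \<epsilon> * (2 * C + K)" unfolding K_def by (simp add: algebra_simps)
      have s6: "a * (2 * \<theta>) + b * (2 * \<theta>) + a * (2 * \<theta>) + b * (2 * \<theta>) = 4 * \<theta> * K"
        unfolding K_def by (simp add: algebra_simps)
      have "\<bar>integral\<^sup>L P (H i) - integral\<^sup>L P h\<bar> \<le> \<eta> / 2"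
        using k s1 s2 s3 s4 s5 s6 eb tb by linarith
      thus "norm (fdiv F (Ps i) (Qs i) - fdiv F P Q) < \<eta>"
        using \<eta> unfolding fdi fd by simp
    qed
  qed

qed


end
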